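(* Consider the continuous-time plant $\dot x=f(x,u)$, $x\in\mathbb{R}^n$, $u\in\mathbb{R}^m$, under zero-order hold and possibly nonuniform sampling, fed back with a control law $U:\mathbb{R}^n\times\mathbb{R}^q\times\mathbb{R}_{>0}\to\mathbb{R}^m$, yielding the exact closed-loop model $\bar F^e(x,e,T)=F^e(x,U(x,e,T),T)$. Assume: (A1) $f$ is locally Lipschitz in $x$ uniformly in $u$: for all compact $\mathcal{X}\subset\mathbb{R}^n$, $\mathcal{U}\subset\mathbb{R}^m$ there is $L>0$ with $|f(x,u)-f(y,u)|\le L|x-y|$ for $x,y\in\mathcal{X}$, $u\in\mathcal{U}$; (A2) $f$ is locally bounded: for every $M,C_u\ge0$ there exists $C_f(M,C_u)>0$, nondecreasing in each variable, with $|f(x,u)|\le C_f$ for $|x|\le M$, $|u|\le C_u$; (A3) $U$ is small-time locally uniformly bounded: for every $M,E\ge0$ there exist $T^u(M,E)>0$ (nonincreasing in each variable) and $C_u(M,E)>0$ (nondecreasing in each variable) with $|U(x,e,T)|\le C_u$ for all $|x|\le M$, $|e|\le E$, $T\in(0,T^u)$. Suppose further that: (i) there exists $\phi\in\mathcal{K}_\infty$ such that for every $E\ge0$ there exists $T^i(E)>0$ such that $|f(0,U(0,e,T))|\le\phi(|e|)$ for all $|e|\le E$, $T\in(0,T^i)$; (ii) for every $M,E\ge0$ there exist $K(M,E)>0$ and $T^{ii}(M,E)>0$, with $K$ nondecreasing and $T^{ii}$ nonincreasing in each variable, such that $|f(x^a,U(x^a,e,T))-f(x^b,U(x^b,e,T))|\le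 K|x^a-x^b|$ for all $|x^a|,|x^b|\le M$, $|e|\le E$, $T\in(0,T^{ii})$. Let $F^{RK}$ be any explicit and consistent Runge-Kutta model for $\dot x=f(x,u)$ and $\bar F^{RK}(x,e,T):=F^{RK}(x,U(x,e,T),T)$. Then the pair $(\bar F^{RK},\bar F^e)$ is REPC.
   Context: $F^e(\xi,u,T)$ denotes the exact discrete-time model: the value at time $T$ of the solution of $\dot x=f(x,u)$ with constant input $u$ starting from $x(0)=\xi$. An $s$-stage explicit Runge-Kutta model is $F^{RK}(x,u,T):=x+T\sum_{i=1}^s b_i f(y_i,u)$, where $y_1=x$ and $y_i=x+T\sum_{j=1}^{i-1}a_{ij}f(y_j,u)$ for $i=2,\dots,s$, with real coefficients $a_{ij},b_i$; it is consistent if $\sum_{i=1}^s b_i=1$. $\mathcal{K}_\infty$: continuous, strictly increasing, unbounded functions $\mathbb{R}_{\ge0}\to\mathbb{R}_{\ge0}$ vanishing at $0$. REPC: a model $\bar F^a$ is Robustly Equilibrium-Preserving Consistent with $\bar F^b$ (and the pair $(\bar F^a,\bar F^b)$ is called REPC) if there exists $\phi\in\mathcal{K}_\infty$ such that for each $M,E\ge0$ there exist constants $K>0$, $T^*>0$ and $\rho\in\mathcal{K}_\infty$ with $|\bar F^a(x^a,e,T)-\bar F^b(x^b,e,T)|\le(1+KT)|x^a-x^b|+T\rho(T)(\max\{|x^a|,|x^b|\}+\phi(|e|))$ for all $|x^a|,|x^b|\le M$, $|e|\le E$, $T\in(0,T^* )$. *)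

theory Defs
  imports "HOL-Analysis.Analysis"
begin

text \<open>Class K-infinity functions on the nonnegative reals (real functions, only their
  behaviour on [0,oo) matters).\<close>
definition Kinf :: "(real \<Rightarrow> real) \<Rightarrow> bool" where
  "Kinf \<phi> \<longleftrightarrow> \<phi> 0 = 0 \<and> continuous_on {0..} \<phi> \<and> strict_mono_on {0..} \<phi>
      \<and> filterlim \<phi> at_top at_top"

definition exact_model :: "('a::euclidean_space \<Rightarrow> 'b \<Rightarrow> 'a) \<Rightarrow> 'a \<Rightarrow> 'b \<Rightarrow> real \<Rightarrow> 'a" where
  "exact_model f \<xi> u T =
     (SOME y. y 0 = \<xi> \<and>
        (\<forall>t\<in>{0..T}. (y has_vector_derivative f (y t) u) (at t within {0..T}))) T"

text \<open>Stages of an explicit Runge-Kutta scheme (0-based: stage i uses a i j for j < i;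
  stage 0 is x itself).\<close>
fun rk_stages :: "('a::real_vector \<Rightarrow> 'b \<Rightarrow> 'a) \<Rightarrow> (nat \<Rightarrow> nat \<Rightarrow> real) \<Rightarrow> 'a \<Rightarrow> 'b \<Rightarrow> real
                   \<Rightarrow> nat \<Rightarrow> 'a list" where
  "rk_stages f a x u T 0 = []"
| "rk_stages f a x u T (Suc i) =
     (let ys = rk_stages f a x u T i
      in ys @ [x + T *\<^sub>R (\<Sum>j<i. a i j *\<^sub>R f (ys ! j) u)])"

definition rk_stage :: "('a::real_vector \<Rightarrow> 'b \<Rightarrow> 'a) \<Rightarrow> (nat \<Rightarrow> nat \<Rightarrow> real) \<Rightarrow> 'a \<Rightarrow> 'b \<Rightarrow> real
                   \<Rightarrow> nat \<Rightarrow> 'a" where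
  "rk_stage f a x u T i = rk_stages f a x u T (Suc i) ! i"

definition rk_model :: "('a::real_vector \<Rightarrow> 'b \<Rightarrow> 'a) \<Rightarrow> nat \<Rightarrow> (nat \<Rightarrow> nat \<Rightarrow> real) \<Rightarrow> (nat \<Rightarrow> real)
                        \<Rightarrow> 'a \<Rightarrow> 'b \<Rightarrow> real \<Rightarrow> 'a" where
  "rk_model f s a b x u T = x + T *\<^sub>R (\<Sum>i<s. b i *\<^sub>R f (rk_stage f a x u T i) u)"

definition rk_consistent :: "nat \<Rightarrow> (nat \<Rightarrow> real) \<Rightarrow> bool" where
  "rk_consistent s b \<longleftrightarrow> (\<Sum>i<s. b i) = 1"

definition REPC :: "('a::real_normed_vector \<Rightarrow> 'c::real_normed_vector \<Rightarrow> real \<Rightarrow> 'a)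
                    \<Rightarrow> ('a \<Rightarrow> 'c \<Rightarrow> real \<Rightarrow> 'a) \<Rightarrow> bool" where
  "REPC Fa Fb \<longleftrightarrow> (\<exists>\<phi>. Kinf \<phi> \<and>
     (\<forall>M\<ge>0. \<forall>E\<ge>0. \<exists>K>0. \<exists>Ts>0. \<exists>\<rho>. Kinf \<rho> \<and>
        (\<forall>xa xb e T. norm xa \<le> M \<longrightarrow> norm xb \<le> M \<longrightarrow> norm e \<le> E \<longrightarrow> 0 < T \<longrightarrow> T < Ts \<longrightarrow>
           norm (Fa xa e T - Fb xb e T)
             \<le> (1 + K * T) * norm (xa - xb)
                + T * \<rho> T * (max (norm xa) (norm xb) + \<phi> (norm e)))))"

end

theory Submission imports Defs begin

lemma ode_exists:
  fixes g :: "'a::euclidean_space \<Rightarrow> 'a"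
  assumes lip: "\<And>x y. norm (g x - g y) \<le> L * norm (x - y)"
    and bnd: "\<And>x. norm (g x) \<le> B" and L0: "0 \<le> L" and TL: "2*T*L \<le> 1" and T0: "0 < T"
  shows "\<exists>y. y 0 = \<xi> \<and> (\<forall>t\<in>{0..T}. (y has_vector_derivative g (y t)) (at t within {0..T}))"
proof -
  define c where "c t = max 0 (min T t)" for t :: real
  have B0: "0 \<le> B" using bnd[of 0] norm_ge_zero order_trans by blast
  have c01: "c t \<in> {0..T}" for t using T0 by (auto simp: c_def)
  have contc: "continuous_on UNIV c" unfolding c_def by (intro continuous_intros)
  have contg: "continuous_on S g" for S
  proof -
    have "L-lipschitz_on S g" using lip L0 by (auto simp: lipschitz_on_def dist_norm)
    then show ?thesis by (rule lipschitz_on_continuous_on)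
  qed
  have contgy: "continuous_on S (\<lambda>s. g (apply_bcontfun y s))" for y :: "real \<Rightarrow>\<^sub>C 'a" and S
    by (rule continuous_on_compose2[OF contg[of UNIV]]) auto
  have intc: "continuous_on UNIV (\<lambda>t. integral {0..c t} (\<lambda>s. g (apply_bcontfun y s)))" for y :: "real \<Rightarrow>\<^sub>C 'a"
  proof (rule continuous_on_compose2[OF indefinite_integral_continuous_1 contc])
    show "(\<lambda>s. g (apply_bcontfun y s)) integrable_on {0..T}"
      by (rule integrable_continuous_real[OF contgy])
  qed (use c01 in auto)
  have inP: "(\<lambda>t. \<xi> + integral {0..c t} (\<lambda>s. g (apply_bcontfun y s))) \<in> bcontfun" for y :: "real \<Rightarrow>\<^sub>C 'a"
  proof (rule bcontfun_normI)
    show "continuous_on UNIV (\<lambda>t. \<xi> + integral {0..c t} (\<lambda>s. g (apply_bcontfun y s)))"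
      by (intro continuous_intros intc)
    fix t
    have "norm (integral {0..c t} (\<lambda>s. g (apply_bcontfun y s))) \<le> B * (c t - 0)"
      by (rule integral_bound) (use c01 bnd contgy in auto)
    also have "\<dots> \<le> B * T" using c01[of t] B0 by (auto intro: mult_left_mono)
    finally show "norm (\<xi> + integral {0..c t} (\<lambda>s. g (apply_bcontfun y s))) \<le> norm \<xi> + B * T"
      by (smt (verit) norm_triangle_ineq)
  qed
  define P where "P y = Bcontfun (\<lambda>t. \<xi> + integral {0..c t} (\<lambda>s. g (apply_bcontfun y s)))"
    for y :: "real \<Rightarrow>\<^sub>C 'a"
  have Papp: "apply_bcontfun (P y) t = \<xi> + integral {0..c t} (\<lambda>s. g (apply_bcontfun y s))" for y t
    unfolding P_def using inP[of y] by (simp add: Bcontfun_inverse)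
  have contr: "dist (P y) (P z) \<le> (T*L) * dist y z" for y z
  proof -
    have "norm (apply_bcontfun (P y - P z) t) \<le> (T*L) * dist y z" for t
    proof -
      have "apply_bcontfun (P y - P z) t = integral {0..c t} (\<lambda>s. g (apply_bcontfun y s) - g (apply_bcontfun z s))"
        by (simp add: Papp integral_diff integrable_continuous_real contgy)
      also have "norm \<dots> \<le> (L * dist y z) * (c t - 0)"
      proof (rule integral_bound)
        fix s
        have "norm (g (apply_bcontfun y s) - g (apply_bcontfun z s)) \<le> L * norm (apply_bcontfun y s - apply_bcontfun z s)"
          by (rule lip)
        also have "\<dots> \<le> L * dist y z"
          using dist_bounded[of y s z] L0 by (simp add: dist_norm mult_left_mono)
        finally show "norm (g (apply_bcontfun y s) - g (apply_bcontfun z s)) \<le> L * dist y z" .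
      qed (use c01 in \<open>auto intro!: continuous_intros contgy\<close>)
      also have "\<dots> \<le> (T*L) * dist y z"
      proof -
        have "c t * dist y z \<le> T * dist y z" using c01[of t] by (simp add: mult_right_mono)
        then have "L * (c t * dist y z) \<le> L * (T * dist y z)" using L0 by (rule mult_left_mono)
        then show ?thesis by (simp add: algebra_simps)
      qed
      finally show ?thesis .
    qed
    then have "norm (P y - P z) \<le> (T*L) * dist y z" by (rule norm_bound)
    then show ?thesis by (simp add: dist_norm)
  qed
  obtain y where fixP: "P y = y"
    using banach_fix_type[of "T*L" P] contr T0 L0 TL by auto
  define yy where "yy = apply_bcontfun y"
  have yyeq: "yy t = \<xi> + integral {0..t} (\<lambda>s. g (yy s))" if "t \<in> {0..T}" for t
  proof -
    have "c t = t" using that by (auto simp: c_def)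
    then show ?thesis unfolding yy_def using Papp[of y t] fixP by simp
  qed
  show ?thesis
  proof (intro exI conjI ballI)
    show "yy 0 = \<xi>" using yyeq[of 0] T0 by simp
    fix t assume t: "t \<in> {0..T}"
    have "((\<lambda>u. \<xi> + integral {0..u} (\<lambda>s. g (yy s))) has_vector_derivative (0 + g (yy t))) (at t within {0..T})"
      by (intro derivative_intros integral_has_vector_derivative t) (auto simp: yy_def intro: contgy)
    then show "(yy has_vector_derivative g (yy t)) (at t within {0..T})"
      by (intro has_vector_derivative_transform[OF t yyeq]) auto
  qed
qed

lemma mvt_bound:
  fixes z :: "real \<Rightarrow> 'a::real_inner"
  assumes t0: "0 \<le> t" and tT: "t \<le> T"
    and der: "\<And>s. s \<in> {0..T} \<Longrightarrow> (z has_vector_derivative z' s) (at s within {0..T})"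
    and bd: "\<And>s. 0 < s \<Longrightarrow> s < t \<Longrightarrow> norm (z' s) \<le> C"
  shows "norm (z t - z 0) \<le> t * C"
proof (cases "t = 0")
  case True then show ?thesis by simp
next
  case False
  then have tpos: "0 < t" using t0 by simp
  have contT: "continuous_on {0..T} z"
    unfolding continuous_on_eq_continuous_within
    using der has_vector_derivative_continuous by blast
  have cont: "continuous_on {0..t} z" by (rule continuous_on_subset[OF contT]) (use tT in auto)
  have "\<exists>x\<in>{0<..<t}. norm (z t - z 0) \<le> norm ((\<lambda>d. d *\<^sub>R z' x) (t - 0))"
  proof (rule mvt_general[OF tpos cont])
    fix x assume x: "0 < x" "x < t"
    then have "at x within {0..T} = at x" using tT by (intro at_within_Icc_at) auto
    then show "(z has_derivative (\<lambda>d. d *\<^sub>R z' x)) (at x)"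
      using der[of x] x tT by (simp add: has_vector_derivative_def)
  qed
  then obtain x where x: "0 < x" "x < t" "norm (z t - z 0) \<le> norm (t *\<^sub>R z' x)" by auto
  have "norm (t *\<^sub>R z' x) \<le> t * C" using bd[OF x(1,2)] tpos by (simp add: mult_left_mono)
  then show ?thesis using x(3) by linarith
qed

lemma apriori:
  fixes z :: "real \<Rightarrow> 'a::real_inner"
  assumes der: "\<And>s. s \<in> {0..T} \<Longrightarrow> (z has_vector_derivative h (z s)) (at s within {0..T})"
    and z0: "z 0 = \<xi>"
    and bnd: "\<And>x. norm (x - \<xi>) \<le> 1 \<Longrightarrow> norm (h x) \<le> B"
    and TB: "T * B < 1" and B0: "0 \<le> B"
  shows "\<forall>t\<in>{0..T}. norm (z t - \<xi>) \<le> 1"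
proof (rule ccontr)
  assume "\<not> ?thesis"
  then obtain t0 where t0: "t0 \<in> {0..T}" "norm (z t0 - \<xi>) > 1" by auto
  define r where "r = (1 + T * B) / 2"
  have r1: "r < 1" "T * B < r" using TB by (auto simp: r_def mult.commute)
  define S where "S = {0..T} \<inter> (\<lambda>t. norm (z t - \<xi>)) -` {r..}"
  have contT: "continuous_on {0..T} z"
    unfolding continuous_on_eq_continuous_within
    using der has_vector_derivative_continuous by blast
  have "closed S" unfolding S_def
    by (rule continuous_closed_preimage) (auto intro!: continuous_intros contT)
  moreover have "bounded S" by (rule bounded_subset[OF compact_imp_bounded[OF compact_Icc[of 0 T]]]) (simp add: S_def)
  ultimately have cS: "compact S" by (simp add: compact_eq_bounded_closed)
  have "t0 \<in> S" using t0 r1 unfolding S_def by simp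
  then have nS: "S \<noteq> {}" by blast
  obtain t1 where t1: "t1 \<in> S" "\<And>s. s \<in> S \<Longrightarrow> t1 \<le> s"
    using compact_attains_inf[OF cS nS] by blast
  have t1T: "0 \<le> t1" "t1 \<le> T" "r \<le> norm (z t1 - \<xi>)" using t1 by (auto simp: S_def)
  have "norm (z t1 - z 0) \<le> t1 * B"
  proof (rule mvt_bound[OF t1T(1,2) der])
    fix s assume s: "0 < s" "s < t1"
    have "s \<notin> S"
    proof
      assume "s \<in> S" then have "t1 \<le> s" by (rule t1(2))
      then show False using s by simp
    qed
    moreover have "s \<in> {0..T}" using s t1T by simp
    ultimately have "norm (z s - \<xi>) < r" unfolding S_def by (simp add: not_le)
    then show "norm (h (z s)) \<le> B" using r1 by (intro bnd) auto
  qed auto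
  moreover have "t1 * B \<le> T * B" using t1T B0 by (simp add: mult_right_mono)
  ultimately show False using t1T(3) r1 z0 by simp
qed

lemma exact_bound:
  fixes h :: "'a::euclidean_space \<Rightarrow> 'a"
  assumes lip: "\<And>y z. y \<in> cball \<xi> 1 \<Longrightarrow> z \<in> cball \<xi> 1 \<Longrightarrow> norm (h y - h z) \<le> L * norm (y - z)"
    and bnd: "\<And>y. y \<in> cball \<xi> 1 \<Longrightarrow> norm (h y) \<le> B"
    and T0: "0 < T" and TB: "T*B < 1" and TL: "2*T*L \<le> 1" and L0: "0 \<le> L" and A: "norm (h \<xi>) \<le> A"
  shows "norm ((SOME y. y 0 = \<xi> \<and> (\<forall>t\<in>{0..T}. (y has_vector_derivative h (y t)) (at t within {0..T}))) T
            - \<xi> - T *\<^sub>R h \<xi>) \<le> T * (2*L*T*A)"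
proof -
  define p where "p x = closest_point (cball \<xi> 1) x" for x
  have pin: "p x \<in> cball \<xi> 1" for x unfolding p_def
    by (rule closest_point_in_set) auto
  have plip: "dist (p x) (p y) \<le> dist x y" for x y unfolding p_def
    by (rule closest_point_lipschitz) auto
  have pself: "p x = x" if "x \<in> cball \<xi> 1" for x unfolding p_def using that by (rule closest_point_self)
  define g where "g x = h (p x)" for x
  have glip: "norm (g x - g y) \<le> L * norm (x - y)" for x y
  proof -
    have "norm (g x - g y) \<le> L * norm (p x - p y)" unfolding g_def by (rule lip[OF pin pin])
    also have "\<dots> \<le> L * norm (x - y)" using plip[of x y] L0 by (simp add: dist_norm mult_left_mono)
    finally show ?thesis .
  qed
  have gbnd: "norm (g x) \<le> B" for x unfolding g_def by (rule bnd[OF pin])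
  have B0: "0 \<le> B" using gbnd[of 0] norm_ge_zero order_trans by blast
  have A0: "0 \<le> A" using A norm_ge_zero order_trans by blast
  have incb: "x \<in> cball \<xi> 1" if "norm (x - \<xi>) \<le> 1" for x
    using that by (simp add: dist_norm norm_minus_commute)
  obtain y where y0: "y 0 = \<xi>" and yd: "\<forall>t\<in>{0..T}. (y has_vector_derivative g (y t)) (at t within {0..T})"
    using ode_exists[of g L B T \<xi>, OF glip gbnd L0 TL T0] by blast
  have yin: "\<forall>t\<in>{0..T}. norm (y t - \<xi>) \<le> 1"
    by (rule apriori[of T y g, OF _ y0 _ TB B0]) (use yd gbnd in auto)
  have "\<exists>y. y 0 = \<xi> \<and> (\<forall>t\<in>{0..T}. (y has_vector_derivative h (y t)) (at t within {0..T}))"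
  proof (intro exI conjI ballI)
    fix t assume t: "t \<in> {0..T}"
    have "g (y t) = h (y t)" unfolding g_def using pself[OF incb] yin t by simp
    then show "(y has_vector_derivative h (y t)) (at t within {0..T})" using yd t by metis
  qed (rule y0)
  then have zP: "(SOME y. y 0 = \<xi> \<and> (\<forall>t\<in>{0..T}. (y has_vector_derivative h (y t)) (at t within {0..T}))) 0 = \<xi> \<and>
     (\<forall>t\<in>{0..T}. ((SOME y. y 0 = \<xi> \<and> (\<forall>t\<in>{0..T}. (y has_vector_derivative h (y t)) (at t within {0..T})))
        has_vector_derivative h ((SOME y. y 0 = \<xi> \<and> (\<forall>t\<in>{0..T}. (y has_vector_derivative h (y t)) (at t within {0..T}))) t)) (at t within {0..T}))"
    by (rule someI_ex)
  define z where "z = (SOME y. y 0 = \<xi> \<and> (\<forall>t\<in>{0..T}. (y has_vector_derivative h (y t)) (at t within {0..T})))"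
  have z0: "z 0 = \<xi>" and zd: "\<And>t. t \<in> {0..T} \<Longrightarrow> (z has_vector_derivative h (z t)) (at t within {0..T})"
    using zP unfolding z_def[symmetric] by auto
  have hbnd: "norm (h x) \<le> B" if "norm (x - \<xi>) \<le> 1" for x using bnd[OF incb[OF that]] .
  have zin: "\<forall>t\<in>{0..T}. norm (z t - \<xi>) \<le> 1"
    by (rule apriori[of T z h, OF zd z0 hbnd TB B0]) auto
  have contT: "continuous_on {0..T} z"
    unfolding continuous_on_eq_continuous_within
    using zd has_vector_derivative_continuous by blast
  have "continuous_on {0..T} (\<lambda>t. norm (z t - \<xi>))" by (intro continuous_intros contT)
  then obtain t0 where t0: "t0 \<in> {0..T}" and t0max: "\<And>t. t \<in> {0..T} \<Longrightarrow> norm (z t - \<xi>) \<le> norm (z t0 - \<xi>)"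
    using continuous_attains_sup[of "{0..T}" "\<lambda>t. norm (z t - \<xi>)"] T0 by auto
  define W where "W = norm (z t0 - \<xi>)"
  have W0: "0 \<le> W" by (simp add: W_def)
  have hdiff: "norm (h (z s) - h \<xi>) \<le> L * W" if "s \<in> {0..T}" for s
  proof -
    have "norm (h (z s) - h \<xi>) \<le> L * norm (z s - \<xi>)"
      using zin that by (intro lip incb) auto
    also have "\<dots> \<le> L * W" using t0max[OF that] L0 by (simp add: W_def mult_left_mono)
    finally show ?thesis .
  qed
  have "norm (z t0 - z 0) \<le> t0 * (L * W + A)"
  proof (rule mvt_bound[of t0 T z])
    fix s assume s: "0 < s" "s < t0"
    then have sT: "s \<in> {0..T}" using t0 by auto
    have "norm (h (z s)) \<le> norm (h (z s) - h \<xi>) + norm (h \<xi>)" using norm_triangle_sub[of "h (z s)" "h \<xi>"] by simp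
    then show "norm (h (z s)) \<le> L * W + A" using hdiff[OF sT] A by linarith
  qed (use t0 zd in auto)
  also have "\<dots> \<le> T * (L * W + A)" using t0 L0 W0 A0 by (intro mult_right_mono) auto
  finally have "W \<le> T * L * W + T * A" using z0 by (simp add: W_def algebra_simps)
  moreover have "T * L * W \<le> W / 2" using TL W0 mult_right_mono[of "2*T*L" 1 W] by simp
  ultimately have Wb: "W \<le> 2 * T * A" by simp
  have "norm ((\<lambda>t. z t - t *\<^sub>R h \<xi>) T - (\<lambda>t. z t - t *\<^sub>R h \<xi>) 0) \<le> T * (L * (2 * T * A))"
  proof (rule mvt_bound[of T T _ "\<lambda>s. h (z s) - h \<xi>"])
    fix s assume s: "s \<in> {0..T}"
    show "((\<lambda>t. z t - t *\<^sub>R h \<xi>) has_vector_derivative h (z s) - h \<xi>) (at s within {0..T})"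
      using zd[OF s] by (auto intro!: derivative_eq_intros)
  next
    fix s assume s: "0 < s" "s < T"
    have "norm (h (z s) - h \<xi>) \<le> L * W" using s by (intro hdiff) auto
    also have "\<dots> \<le> L * (2 * T * A)" using Wb L0 by (simp add: mult_left_mono)
    finally show "norm (h (z s) - h \<xi>) \<le> L * (2 * T * A)" .
  qed (use T0 in auto)
  then show ?thesis using z0 unfolding z_def[symmetric] by (simp add: algebra_simps)
qed

lemma rk_stages_length: "length (rk_stages f a x u T n) = n"
  by (induct n) (simp_all add: Let_def)

lemma rk_stages_nth: "i < n \<Longrightarrow> rk_stages f a x u T n ! i = rk_stage f a x u T i"
proof (induct n)
  case 0 then show ?case by simp
next
  case (Suc n)
  show ?case
  proof (cases "i < n")
    case True
    then show ?thesis using Suc by (simp add: Let_def nth_append rk_stages_length)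
  next
    case False
    then have "i = n" using Suc by simp
    then show ?thesis by (simp add: rk_stage_def)
  qed
qed

lemma rk_stage_eq:
  "rk_stage f a x u T i = x + T *\<^sub>R (\<Sum>j<i. a i j *\<^sub>R f (rk_stage f a x u T j) u)"
proof -
  have "rk_stage f a x u T i = x + T *\<^sub>R (\<Sum>j<i. a i j *\<^sub>R f (rk_stages f a x u T i ! j) u)"
    by (simp add: rk_stage_def Let_def nth_append rk_stages_length)
  also have "(\<Sum>j<i. a i j *\<^sub>R f (rk_stages f a x u T i ! j) u) = (\<Sum>j<i. a i j *\<^sub>R f (rk_stage f a x u T j) u)"
    by (rule sum.cong) (auto simp: rk_stages_nth)
  finally show ?thesis .
qed

lemma norm_sum_scale_le:
  fixes v :: "nat \<Rightarrow> 'a::real_normed_vector"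
  assumes "\<And>j. j < i \<Longrightarrow> norm (v j) \<le> C" and "0 \<le> C" and "(\<Sum>j<i. \<bar>c j\<bar>) \<le> \<alpha>"
  shows "norm (\<Sum>j<i. c j *\<^sub>R v j) \<le> \<alpha> * C"
proof -
  have "norm (\<Sum>j<i. c j *\<^sub>R v j) \<le> (\<Sum>j<i. norm (c j *\<^sub>R v j))" by (rule norm_sum)
  also have "\<dots> \<le> (\<Sum>j<i. \<bar>c j\<bar> * C)"
    by (rule sum_mono) (use assms(1) in \<open>auto intro: mult_left_mono\<close>)
  also have "\<dots> = (\<Sum>j<i. \<bar>c j\<bar>) * C" by (simp add: sum_distrib_right)
  also have "\<dots> \<le> \<alpha> * C" using assms(2,3) by (rule mult_right_mono[rotated])
  finally show ?thesis .
qed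

lemma stage_bound:
  fixes f :: "'a::real_normed_vector \<Rightarrow> 'b \<Rightarrow> 'a"
  assumes alpha: "\<And>i. i < s \<Longrightarrow> (\<Sum>j<i. \<bar>a i j\<bar>) \<le> \<alpha>"
    and lipx: "\<And>y. norm (y - x) \<le> 1 \<Longrightarrow> norm (f y u - f x u) \<le> L * norm (y - x)"
    and bnd: "\<And>y. norm (y - x) \<le> 1 \<Longrightarrow> norm (f y u) \<le> B"
    and A: "norm (f x u) \<le> A" and T0: "0 \<le> T" and TaB: "T*\<alpha>*B \<le> 1" and TLa: "2*T*L*\<alpha> \<le> 1"
    and L0: "0 \<le> L"
  shows "i < s \<Longrightarrow> norm (rk_stage f a x u T i - x) \<le> 1 \<and> norm (rk_stage f a x u T i - x) \<le> 2*\<alpha>*T*A"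
proof (induction i rule: less_induct)
  case (less i)
  have A0: "0 \<le> A" using A norm_ge_zero order_trans by blast
  have B0: "0 \<le> B" using bnd[of x, simplified] norm_ge_zero[of "f x u"] by linarith
  let ?y = "\<lambda>j. rk_stage f a x u T j"
  have fB: "norm (f (?y j) u) \<le> B" if "j < i" for j
    using less.IH[of j] that less.prems by (intro bnd) auto
  have fA: "norm (f (?y j) u) \<le> 2*A" if "j < i" for j
  proof -
    have ih: "norm (?y j - x) \<le> 1" "norm (?y j - x) \<le> 2*\<alpha>*T*A"
      using less.IH[of j] that less.prems by auto
    have "norm (f (?y j) u) \<le> norm (f (?y j) u - f x u) + norm (f x u)"
      using norm_triangle_sub[of "f (?y j) u" "f x u"] by simp
    also have "\<dots> \<le> L * (2*\<alpha>*T*A) + A"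
      using lipx[OF ih(1)] mult_left_mono[OF ih(2) L0] A by linarith
    also have "L * (2*\<alpha>*T*A) = (2*T*L*\<alpha>) * A" by simp
    also have "\<dots> \<le> 1 * A" using TLa A0 by (rule mult_right_mono)
    finally show ?thesis by simp
  qed
  have eq: "norm (?y i - x) = T * norm (\<Sum>j<i. a i j *\<^sub>R f (?y j) u)"
    using T0 by (subst rk_stage_eq) simp
  have s1: "norm (\<Sum>j<i. a i j *\<^sub>R f (?y j) u) \<le> \<alpha> * B"
    by (rule norm_sum_scale_le) (use fB B0 alpha less.prems in auto)
  have s2: "norm (\<Sum>j<i. a i j *\<^sub>R f (?y j) u) \<le> \<alpha> * (2*A)"
    by (rule norm_sum_scale_le) (use fA A0 alpha less.prems in auto)
  have "norm (?y i - x) \<le> T * (\<alpha> * B)" unfolding eq using s1 T0 by (rule mult_left_mono)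
  moreover have "norm (?y i - x) \<le> T * (\<alpha> * (2*A))" unfolding eq using s2 T0 by (rule mult_left_mono)
  ultimately show ?case using TaB by (simp add: algebra_simps)
qed

lemma rk_rem:
  fixes f :: "'a::real_normed_vector \<Rightarrow> 'b \<Rightarrow> 'a"
  assumes cons: "(\<Sum>i<s. b i) = 1"
    and st: "\<And>i. i < s \<Longrightarrow> norm (rk_stage f a x u T i - x) \<le> 1 \<and> norm (rk_stage f a x u T i - x) \<le> D"
    and lipx: "\<And>y. norm (y - x) \<le> 1 \<Longrightarrow> norm (f y u - f x u) \<le> L * norm (y - x)"
    and T0: "0 \<le> T" and L0: "0 \<le> L" and D0: "0 \<le> D" and beta: "(\<Sum>i<s. \<bar>b i\<bar>) \<le> \<beta>"
  shows "norm (rk_model f s a b x u T - x - T *\<^sub>R f x u) \<le> T * (\<beta> * (L * D))"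
proof -
  let ?y = "\<lambda>j. rk_stage f a x u T j"
  have "rk_model f s a b x u T - x - T *\<^sub>R f x u
      = T *\<^sub>R ((\<Sum>i<s. b i *\<^sub>R f (?y i) u) - (\<Sum>i<s. b i) *\<^sub>R f x u)"
    by (simp add: rk_model_def cons algebra_simps)
  also have "(\<Sum>i<s. b i *\<^sub>R f (?y i) u) - (\<Sum>i<s. b i) *\<^sub>R f x u = (\<Sum>i<s. b i *\<^sub>R (f (?y i) u - f x u))"
    by (simp add: scaleR_sum_left sum_subtractf scaleR_diff_right)
  finally have eq: "norm (rk_model f s a b x u T - x - T *\<^sub>R f x u) = T * norm (\<Sum>i<s. b i *\<^sub>R (f (?y i) u - f x u))"
    using T0 by simp
  have "norm (\<Sum>i<s. b i *\<^sub>R (f (?y i) u - f x u)) \<le> \<beta> * (L * D)"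
  proof (rule norm_sum_scale_le)
    fix i assume i: "i < s"
    have "norm (f (?y i) u - f x u) \<le> L * norm (?y i - x)" using st[OF i] by (intro lipx) auto
    also have "\<dots> \<le> L * D" using st[OF i] L0 by (intro mult_left_mono) auto
    finally show "norm (f (?y i) u - f x u) \<le> L * D" .
  qed (use L0 D0 beta in auto)
  then show ?thesis unfolding eq using T0 by (rule mult_left_mono)
qed

lemma Kinf_lin: "0 < C \<Longrightarrow> Kinf (\<lambda>T. C * T)"
  unfolding Kinf_def
proof (intro conjI)
  assume C: "0 < C"
  show "strict_mono_on {0..} (\<lambda>T. C * T)" using C by (auto simp: strict_mono_on_def)
  show "filterlim (\<lambda>T. C * T) at_top at_top"
    by (rule filterlim_tendsto_pos_mult_at_top[OF tendsto_const C filterlim_ident])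
qed (auto intro: continuous_intros)

theorem theorem3:
  fixes f :: "'a::euclidean_space \<Rightarrow> 'b::euclidean_space \<Rightarrow> 'a"
    and U :: "'a \<Rightarrow> 'c::euclidean_space \<Rightarrow> real \<Rightarrow> 'b"
    and s :: nat and a :: "nat \<Rightarrow> nat \<Rightarrow> real" and b :: "nat \<Rightarrow> real"
  assumes A1: "\<forall>X UU. compact X \<longrightarrow> compact UU \<longrightarrow>
                 (\<exists>L>0. \<forall>x\<in>X. \<forall>y\<in>X. \<forall>u\<in>UU. norm (f x u - f y u) \<le> L * norm (x - y))"
    and A2: "\<exists>Cf :: real \<Rightarrow> real \<Rightarrow> real.
               (\<forall>M Cu. 0 \<le> M \<longrightarrow> 0 \<le> Cu \<longrightarrow> Cf M Cu > 0) \<and>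
               (\<forall>M M' Cu Cu'. 0 \<le> M \<longrightarrow> M \<le> M' \<longrightarrow> 0 \<le> Cu \<longrightarrow> Cu \<le> Cu' \<longrightarrow> Cf M Cu \<le> Cf M' Cu') \<and>
               (\<forall>M Cu x u. 0 \<le> M \<longrightarrow> 0 \<le> Cu \<longrightarrow> norm x \<le> M \<longrightarrow> norm u \<le> Cu \<longrightarrow>
                   norm (f x u) \<le> Cf M Cu)"
    and A3: "\<exists>Tu Cu :: real \<Rightarrow> real \<Rightarrow> real.
               (\<forall>M E. 0 \<le> M \<longrightarrow> 0 \<le> E \<longrightarrow> Tu M E > 0 \<and> Cu M E > 0) \<and>
               (\<forall>M M' E E'. 0 \<le> M \<longrightarrow> M \<le> M' \<longrightarrow> 0 \<le> E \<longrightarrow> E \<le> E' \<longrightarrow>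
                   Tu M' E' \<le> Tu M E \<and> Cu M E \<le> Cu M' E') \<and>
               (\<forall>M E x e T. 0 \<le> M \<longrightarrow> 0 \<le> E \<longrightarrow> norm x \<le> M \<longrightarrow> norm e \<le> E \<longrightarrow>
                   0 < T \<longrightarrow> T < Tu M E \<longrightarrow> norm (U x e T) \<le> Cu M E)"
    and i: "\<exists>\<phi>. Kinf \<phi> \<and> (\<forall>E\<ge>0. \<exists>Ti>0. \<forall>e T. norm e \<le> E \<longrightarrow> 0 < T \<longrightarrow> T < Ti \<longrightarrow>
               norm (f 0 (U 0 e T)) \<le> \<phi> (norm e))"
    and ii: "\<exists>K Tii :: real \<Rightarrow> real \<Rightarrow> real.
               (\<forall>M E. 0 \<le> M \<longrightarrow> 0 \<le> E \<longrightarrow> K M E > 0 \<and> Tii M E > 0) \<and>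
               (\<forall>M M' E E'. 0 \<le> M \<longrightarrow> M \<le> M' \<longrightarrow> 0 \<le> E \<longrightarrow> E \<le> E' \<longrightarrow>
                   K M E \<le> K M' E' \<and> Tii M' E' \<le> Tii M E) \<and>
               (\<forall>M E xa xb e T. 0 \<le> M \<longrightarrow> 0 \<le> E \<longrightarrow> norm xa \<le> M \<longrightarrow> norm xb \<le> M \<longrightarrow>
                   norm e \<le> E \<longrightarrow> 0 < T \<longrightarrow> T < Tii M E \<longrightarrow>
                   norm (f xa (U xa e T) - f xb (U xb e T)) \<le> K M E * norm (xa - xb))"
    and cons: "rk_consistent s b"
  shows "REPC (\<lambda>x e T. rk_model f s a b x (U x e T) T)
              (\<lambda>x e T. exact_model f x (U x e T) T)"
proof -
  obtain Cf :: "real \<Rightarrow> real \<Rightarrow> real" where Cfpos: "\<And>M Cu. 0 \<le> M \<Longrightarrow> 0 \<le> Cu \<Longrightarrow> Cf M Cu > 0"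
    and Cfb: "\<And>M Cu x u. 0 \<le> M \<Longrightarrow> 0 \<le> Cu \<Longrightarrow> norm x \<le> M \<Longrightarrow> norm u \<le> Cu \<Longrightarrow> norm (f x u) \<le> Cf M Cu"
    using A2 by blast
  obtain Tu Cu :: "real \<Rightarrow> real \<Rightarrow> real" where Tupos: "\<And>M E. 0 \<le> M \<Longrightarrow> 0 \<le> E \<Longrightarrow> Tu M E > 0 \<and> Cu M E > 0"
    and Cub: "\<And>M E x e T. 0 \<le> M \<Longrightarrow> 0 \<le> E \<Longrightarrow> norm x \<le> M \<Longrightarrow> norm e \<le> E \<Longrightarrow>
                   0 < T \<Longrightarrow> T < Tu M E \<Longrightarrow> norm (U x e T) \<le> Cu M E"
    using A3 by blast
  obtain \<phi> where phiK: "Kinf \<phi>" and phiT: "\<forall>E\<ge>0. \<exists>Ti>0. \<forall>e T. norm e \<le> E \<longrightarrow> 0 < T \<longrightarrow> T < Ti \<longrightarrow>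
               norm (f 0 (U 0 e T)) \<le> \<phi> (norm e)"
    using i by blast
  obtain K Tii :: "real \<Rightarrow> real \<Rightarrow> real" where Kpos: "\<And>M E. 0 \<le> M \<Longrightarrow> 0 \<le> E \<Longrightarrow> K M E > 0 \<and> Tii M E > 0"
    and Kb: "\<And>M E xa xb e T. 0 \<le> M \<Longrightarrow> 0 \<le> E \<Longrightarrow> norm xa \<le> M \<Longrightarrow> norm xb \<le> M \<Longrightarrow>
                   norm e \<le> E \<Longrightarrow> 0 < T \<Longrightarrow> T < Tii M E \<Longrightarrow>
                   norm (f xa (U xa e T) - f xb (U xb e T)) \<le> K M E * norm (xa - xb)"
    using ii by blast
  have consb: "(\<Sum>i<s. b i) = 1" using cons by (simp add: rk_consistent_def)
  define \<alpha> where "\<alpha> = 1 + (\<Sum>i<s. \<Sum>j<i. \<bar>a i j\<bar>)"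
  define \<beta> where "\<beta> = (\<Sum>i<s. \<bar>b i\<bar>)"
  have \<alpha>1: "1 \<le> \<alpha>" unfolding \<alpha>_def by (simp add: sum_nonneg)
  have \<alpha>i: "(\<Sum>j<i. \<bar>a i j\<bar>) \<le> \<alpha>" if "i < s" for i
  proof -
    have "(\<Sum>j<i. \<bar>a i j\<bar>) \<le> (\<Sum>i<s. \<Sum>j<i. \<bar>a i j\<bar>)"
      by (rule member_le_sum[of i "{..<s}" "\<lambda>i. \<Sum>j<i. \<bar>a i j\<bar>"]) (use that in \<open>auto intro: sum_nonneg\<close>)
    then show ?thesis unfolding \<alpha>_def by simp
  qed
  have \<beta>0: "0 \<le> \<beta>" unfolding \<beta>_def by (simp add: sum_nonneg)
  show ?thesis
    unfolding REPC_def
  proof (intro exI[of _ \<phi>] conjI phiK allI impI)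
    fix M E :: real assume M0: "0 \<le> M" and E0: "0 \<le> E"
    obtain TiE where TiE: "TiE > 0" and TiEb: "\<And>e T. norm e \<le> E \<Longrightarrow> 0 < T \<Longrightarrow> T < TiE \<Longrightarrow>
               norm (f 0 (U 0 e T)) \<le> \<phi> (norm e)"
      using phiT E0 by blast
    define CU where "CU = Cu M E"
    define KK where "KK = K M E"
    have CU0: "0 < CU" "0 < Tu M E" using Tupos[OF M0 E0] by (auto simp: CU_def)
    have KK0: "0 < KK" "0 < Tii M E" using Kpos[OF M0 E0] by (auto simp: KK_def)
    obtain L where L0: "L > 0" and Lb: "\<And>x y u. x \<in> cball 0 (M+1) \<Longrightarrow> y \<in> cball 0 (M+1) \<Longrightarrow> u \<in> cball 0 CU \<Longrightarrow>
        norm (f x u - f y u) \<le> L * norm (x - y)"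
      using A1[rule_format, OF compact_cball compact_cball, of 0 "M+1" 0 CU] by blast
    define B where "B = Cf (M+1) CU"
    have B0: "0 < B" unfolding B_def using Cfpos M0 CU0 by simp
    define Ts where "Ts = min (min (Tu M E) TiE) (min (Tii M E) (1 / (2*\<alpha>*(B+L+1))))"
    define C where "C = (2*\<alpha>*\<beta>*L + 2*L)*(KK+1) + 1"
    have "0 \<le> (2*\<alpha>*\<beta>*L + 2*L)*(KK+1)" using \<alpha>1 \<beta>0 L0 KK0
      by (intro mult_nonneg_nonneg add_nonneg_nonneg) auto
    then have C0: "0 < C" unfolding C_def by linarith
    have Ts0: "0 < Ts" unfolding Ts_def using CU0 KK0 TiE \<alpha>1 B0 L0 by simp
    have main: "\<forall>xa xb e T. norm xa \<le> M \<longrightarrow> norm xb \<le> M \<longrightarrow> norm e \<le> E \<longrightarrow> 0 < T \<longrightarrow> T < Ts \<longrightarrow>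
           norm (rk_model f s a b xa (U xa e T) T - exact_model f xb (U xb e T) T)
             \<le> (1 + KK * T) * norm (xa - xb) + T * (C * T) * (max (norm xa) (norm xb) + \<phi> (norm e))"
    proof (intro allI impI)
      fix xa xb :: 'a and e :: 'c and T :: real
      assume xa: "norm xa \<le> M" and xb: "norm xb \<le> M" and e: "norm e \<le> E" and T0: "0 < T" and TTs: "T < Ts"
      have TTu: "T < Tu M E" and TTi: "T < TiE" and TTii: "T < Tii M E" using TTs by (auto simp: Ts_def)
      have "T < 1 / (2*\<alpha>*(B+L+1))" using TTs by (auto simp: Ts_def)
      moreover have "0 < 2*\<alpha>*(B+L+1)" using \<alpha>1 B0 L0 by simp
      ultimately have Tsmall: "T * (2*\<alpha>*(B+L+1)) < 1" by (simp add: less_divide_eq)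
      have TaB: "T*\<alpha>*B \<le> 1" and TLa: "2*T*L*\<alpha> \<le> 1" and TL: "2*T*L \<le> 1" and TB: "T*B < 1"
      proof -
        have p: "0 \<le> T*\<alpha>*B" "0 \<le> T*\<alpha>*L" "0 \<le> T*\<alpha>" using T0 \<alpha>1 B0 L0 by auto
        have e1: "T * (2*\<alpha>*(B+L+1)) = 2*(T*\<alpha>*B) + 2*(T*\<alpha>*L) + 2*(T*\<alpha>)" by (simp add: algebra_simps)
        have "T*L \<le> T*\<alpha>*L" using T0 L0 \<alpha>1 by (simp add: mult_left_mono mult_right_mono)
        moreover have "T*B \<le> T*\<alpha>*B" using T0 B0 \<alpha>1 by (simp add: mult_left_mono mult_right_mono)
        ultimately show "T*\<alpha>*B \<le> 1" "2*T*L*\<alpha> \<le> 1" "2*T*L \<le> 1" "T*B < 1"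
          using Tsmall e1 p by (simp_all add: algebra_simps)
      qed
      define ua where "ua = U xa e T"
      define ub where "ub = U xb e T"
      have ua: "norm ua \<le> CU" using Cub[OF M0 E0 xa e T0 TTu] by (simp add: ua_def CU_def)
      have ub: "norm ub \<le> CU" using Cub[OF M0 E0 xb e T0 TTu] by (simp add: ub_def CU_def)
      have f0: "norm (f 0 (U 0 e T)) \<le> \<phi> (norm e)" by (rule TiEb[OF e T0 TTi])
      have phi0: "0 \<le> \<phi> (norm e)" using f0 norm_ge_zero order_trans by blast
      define Q where "Q = max (norm xa) (norm xb) + \<phi> (norm e)"
      have Q0: "0 \<le> Q" unfolding Q_def using phi0 by (simp add: le_max_iff_disj)
      have fA: "norm (f x (U x e T)) \<le> (KK+1) * Q" if x: "norm x \<le> M" "norm x \<le> max (norm xa) (norm xb)" for x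
      proof -
        have "norm (f x (U x e T) - f 0 (U 0 e T)) \<le> KK * norm (x - 0)"
          unfolding KK_def by (rule Kb[OF M0 E0 x(1) _ e T0 TTii]) (use M0 in simp)
        then have "norm (f x (U x e T)) \<le> KK * norm x + \<phi> (norm e)"
          using f0 norm_triangle_sub[of "f x (U x e T)" "f 0 (U 0 e T)"] by simp
        also have "\<dots> \<le> KK * Q + 1 * Q"
        proof -
          have "KK * norm x \<le> KK * Q" using x(2) KK0 phi0 by (intro mult_left_mono) (auto simp: Q_def)
          moreover have "\<phi> (norm e) \<le> Q" unfolding Q_def by (simp add: le_max_iff_disj)
          ultimately show ?thesis by simp
        qed
        finally show ?thesis by (simp add: algebra_simps)
      qed
      have fAa: "norm (f xa ua) \<le> (KK+1) * Q" unfolding ua_def by (rule fA[OF xa]) simp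
      have fAb: "norm (f xb ub) \<le> (KK+1) * Q" unfolding ub_def by (rule fA[OF xb]) simp
      have inball: "norm y \<le> M + 1" if "norm (y - x) \<le> 1" "norm x \<le> M" for x y :: 'a
        using that norm_triangle_sub[of y x] by simp
      have lipa: "norm (f y ua - f xa ua) \<le> L * norm (y - xa)" if "norm (y - xa) \<le> 1" for y
        by (rule Lb) (use inball[OF that xa] xa ua in auto)
      have bnda: "norm (f y ua) \<le> B" if "norm (y - xa) \<le> 1" for y
        unfolding B_def by (rule Cfb) (use inball[OF that xa] ua M0 CU0 in auto)
      have st: "norm (rk_stage f a xa ua T i - xa) \<le> 1 \<and> norm (rk_stage f a xa ua T i - xa) \<le> 2*\<alpha>*T*((KK+1)*Q)"
        if "i < s" for i
        by (rule stage_bound[of s a \<alpha> xa f ua L B, OF \<alpha>i lipa bnda fAa _ TaB TLa _ that])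
           (use T0 L0 in auto)
      have Ra: "norm (rk_model f s a b xa ua T - xa - T *\<^sub>R f xa ua) \<le> T * (\<beta> * (L * (2*\<alpha>*T*((KK+1)*Q))))"
        by (rule rk_rem[where \<beta>=\<beta>, OF consb st lipa])
           (use T0 L0 \<alpha>1 KK0 Q0 in \<open>auto simp: \<beta>_def\<close>)
      have lipb: "norm (f y ub - f z ub) \<le> L * norm (y - z)" if "y \<in> cball xb 1" "z \<in> cball xb 1" for y z
        by (rule Lb) (use that inball[OF _ xb, of y] inball[OF _ xb, of z] ub in \<open>auto simp: dist_norm norm_minus_commute\<close>)
      have bndb: "norm (f y ub) \<le> B" if "y \<in> cball xb 1" for y
        unfolding B_def by (rule Cfb) (use that inball[OF _ xb, of y] ub M0 CU0 in \<open>auto simp: dist_norm norm_minus_commute\<close>)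
      have Rb: "norm (exact_model f xb ub T - xb - T *\<^sub>R f xb ub) \<le> T * (2*L*T*((KK+1)*Q))"
        unfolding exact_model_def
        by (rule exact_bound[of xb "\<lambda>y. f y ub" L B T, OF lipb bndb T0 TB TL _ fAb]) (use L0 in auto)
      have fd: "norm (f xa ua - f xb ub) \<le> KK * norm (xa - xb)"
        unfolding ua_def ub_def KK_def by (rule Kb[OF M0 E0 xa xb e T0 TTii])
      have decomp: "rk_model f s a b xa ua T - exact_model f xb ub T
          = (xa - xb) + T *\<^sub>R (f xa ua - f xb ub) + (rk_model f s a b xa ua T - xa - T *\<^sub>R f xa ua)
            - (exact_model f xb ub T - xb - T *\<^sub>R f xb ub)"
        by (simp add: algebra_simps)
      have "norm (rk_model f s a b xa ua T - exact_model f xb ub T)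
          \<le> norm (xa - xb) + T * (KK * norm (xa - xb)) + T * (\<beta> * (L * (2*\<alpha>*T*((KK+1)*Q)))) + T * (2*L*T*((KK+1)*Q))"
      proof -
        have "norm (T *\<^sub>R (f xa ua - f xb ub)) \<le> T * (KK * norm (xa - xb))"
          using fd T0 by (simp add: mult_left_mono)
        then show ?thesis unfolding decomp using Ra Rb
          by (smt (verit) norm_triangle_ineq norm_triangle_ineq4)
      qed
      moreover have "T * (\<beta> * (L * (2*\<alpha>*T*((KK+1)*Q)))) + T * (2*L*T*((KK+1)*Q))
          = T * (T * ((2*\<alpha>*\<beta>*L + 2*L)*(KK+1)) * Q)" by (simp add: algebra_simps)
      moreover have "T * (T * ((2*\<alpha>*\<beta>*L + 2*L)*(KK+1)) * Q) \<le> T * (C * T * Q)"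
      proof -
        have "T * ((2*\<alpha>*\<beta>*L + 2*L)*(KK+1)) \<le> C * T" unfolding C_def using T0 by (simp add: algebra_simps)
        then have "T * ((2*\<alpha>*\<beta>*L + 2*L)*(KK+1)) * Q \<le> C * T * Q" using Q0 by (rule mult_right_mono)
        then show ?thesis using T0 by (simp add: mult_left_mono)
      qed
      moreover have "(1 + KK*T)*norm(xa-xb) + T*(C*T)*Q = norm (xa-xb) + T*(KK*norm(xa-xb)) + T*(C*T*Q)"
        by (simp add: algebra_simps)
      ultimately have fin: "norm (rk_model f s a b xa ua T - exact_model f xb ub T)
             \<le> (1 + KK * T) * norm (xa - xb) + T * (C * T) * Q" by linarith
      show "norm (rk_model f s a b xa (U xa e T) T - exact_model f xb (U xb e T) T)
             \<le> (1 + KK * T) * norm (xa - xb) + T * (C * T) * (max (norm xa) (norm xb) + \<phi> (norm e))"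
        using fin unfolding ua_def Q_def ub_def .
    qed
    show "\<exists>Ka>0. \<exists>Ts>0. \<exists>\<rho>. Kinf \<rho> \<and> (\<forall>xa xb e T. norm xa \<le> M \<longrightarrow> norm xb \<le> M \<longrightarrow> norm e \<le> E \<longrightarrow> 0 < T \<longrightarrow> T < Ts \<longrightarrow>
           norm (rk_model f s a b xa (U xa e T) T - exact_model f xb (U xb e T) T)
             \<le> (1 + Ka * T) * norm (xa - xb) + T * \<rho> T * (max (norm xa) (norm xb) + \<phi> (norm e)))"
      using KK0(1) Ts0 Kinf_lin[OF C0] main by blast
  qed
qed

end
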